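(* Let $G$ be an oriented graph on $[n]$ with $|\mathcal{P}(G)|\ge 1$, and suppose the poset $P=([n],\le_G)$ has dimension $2$. Then \[\max_{\sigma,\rho\in\mathcal{P}(G)} d_K(\sigma,\rho)=|I(P)|.\]
   Context: Write a permutation $\sigma\in S_n$ as $\sigma=\sigma_1\cdots\sigma_n$. A permutation $\sigma$ satisfies an oriented graph $G=([n],E)$ if $\sigma_u>\sigma_v$ for every oriented edge $u\to v\in E$; $\mathcal{P}(G)$ is the set of permutations satisfying $G$. Write $u\rightsquigarrow v$ if there is an oriented path from $u$ to $v$ in $G$. The poset $P=([n],\le_G)$ is defined by $a\le_G b$ iff $a\rightsquigarrow b$ or $a=b$. The dimension of a poset is the smallest number of total orders on its ground set whose intersection is the poset's order. $I(P)=\{(i,j): i<j,\ i\not\rightsquigarrow j,\ j\not\rightsquigarrow i\}$ is the set of incomparable pairs. For $\sigma,\rho\in S_n$, a pair $i<j$ is discordant if $(\sigma_i-\sigma_j)(\rho_i-\rho_j)<0$; $d_K(\sigma,\rho)$ (Kendall-Tau metric) is the number of discordant pairs. *)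

theory Defs
  imports "HOL-Combinatorics.Permutations"
begin

definition oriented_graph :: "nat \<Rightarrow> (nat \<times> nat) set \<Rightarrow> bool" where
  "oriented_graph n E \<longleftrightarrow> E \<subseteq> {1..n} \<times> {1..n} \<and> (\<forall>u. (u,u) \<notin> E)
     \<and> (\<forall>u v. (u,v) \<in> E \<longrightarrow> (v,u) \<notin> E)"

definition satisfies :: "(nat \<times> nat) set \<Rightarrow> (nat \<Rightarrow> nat) \<Rightarrow> bool" where
  "satisfies E \<sigma> \<longleftrightarrow> (\<forall>u v. (u,v) \<in> E \<longrightarrow> \<sigma> u > \<sigma> v)"

definition sat_perms :: "nat \<Rightarrow> (nat \<times> nat) set \<Rightarrow> (nat \<Rightarrow> nat) set" where
  "sat_perms n E = {\<sigma>. \<sigma> permutes {1..n} \<and> satisfies E \<sigma>}"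

abbreviation reaches :: "(nat \<times> nat) set \<Rightarrow> nat \<Rightarrow> nat \<Rightarrow> bool" where
  "reaches E u v \<equiv> (u, v) \<in> E\<^sup>+"

definition leG :: "nat \<Rightarrow> (nat \<times> nat) set \<Rightarrow> (nat \<times> nat) set" where
  "leG n E = {(a,b). a \<in> {1..n} \<and> b \<in> {1..n} \<and> (reaches E a b \<or> a = b)}"

definition order_dim :: "nat set \<Rightarrow> (nat \<times> nat) set \<Rightarrow> nat" where
  "order_dim A R = (LEAST k. \<exists>F. finite F \<and> card F = k \<and>
       (\<forall>L\<in>F. linear_order_on A L) \<and> \<Inter>F = R)"

definition incomparable_pairs :: "nat \<Rightarrow> (nat \<times> nat) set \<Rightarrow> (nat \<times> nat) set" where
  "incomparable_pairs n E = {(i,j). i \<in> {1..n} \<and> j \<in> {1..n} \<and> i < j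
       \<and> \<not> reaches E i j \<and> \<not> reaches E j i}"

definition kendall_tau :: "nat \<Rightarrow> (nat \<Rightarrow> nat) \<Rightarrow> (nat \<Rightarrow> nat) \<Rightarrow> nat" where
  "kendall_tau n \<sigma> \<rho> = card {(i,j). i \<in> {1..n} \<and> j \<in> {1..n} \<and> i < j \<and>
       (int (\<sigma> i) - int (\<sigma> j)) * (int (\<rho> i) - int (\<rho> j)) < 0}"

end

theory Submission
  imports Defs
begin

lemma rank_up_strict:
  assumes "finite A" "trans R" "antisym R" "R \<subseteq> A \<times> A" "\<forall>x\<in>A. (x,x) \<in> R"
    and "(x,y) \<in> R" "x \<noteq> y"
  shows "card {z\<in>A. (y,z) \<in> R} < card {z\<in>A. (x,z) \<in> R}"
proof (rule psubset_card_mono)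
  show "finite {z\<in>A. (x,z) \<in> R}" using assms by auto
  have xA: "x \<in> A" using assms by auto
  have "{z\<in>A. (y,z) \<in> R} \<subseteq> {z\<in>A. (x,z) \<in> R}"
    using assms(2,6) by (auto dest: transD)
  moreover have "x \<in> {z\<in>A. (x,z) \<in> R}" using xA assms(5) by auto
  moreover have "x \<notin> {z\<in>A. (y,z) \<in> R}" using assms(3,6,7) by (auto dest: antisymD)
  ultimately show "{z\<in>A. (y,z) \<in> R} \<subset> {z\<in>A. (x,z) \<in> R}" by blast
qed

lemma rank_down_strict:
  assumes "finite A" "trans R" "antisym R" "R \<subseteq> A \<times> A" "\<forall>x\<in>A. (x,x) \<in> R"
    and "(x,y) \<in> R" "x \<noteq> y"
  shows "card {z\<in>A. (z,x) \<in> R} < card {z\<in>A. (z,y) \<in> R}"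
proof (rule psubset_card_mono)
  show "finite {z\<in>A. (z,y) \<in> R}" using assms by auto
  have yA: "y \<in> A" using assms by auto
  have "{z\<in>A. (z,x) \<in> R} \<subseteq> {z\<in>A. (z,y) \<in> R}"
    using assms(2,6) by (auto dest: transD)
  moreover have "y \<in> {z\<in>A. (z,y) \<in> R}" using yA assms(5) by auto
  moreover have "y \<notin> {z\<in>A. (z,x) \<in> R}" using assms(3,6,7) by (auto dest: antisymD)
  ultimately show "{z\<in>A. (z,x) \<in> R} \<subset> {z\<in>A. (z,y) \<in> R}" by blast
qed

lemma lin_ext:
  fixes A :: "nat set"
  assumes "finite A" "trans Q" "antisym Q" "Q \<subseteq> A \<times> A" "\<forall>x\<in>A. (x,x) \<in> Q"
  shows "\<exists>L. linear_order_on A L \<and> Q \<subseteq> L"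
proof -
  define h where "h x = card {z\<in>A. (z,x) \<in> Q}" for x
  define L where "L = {(x,y). x\<in>A \<and> y\<in>A \<and> (h x < h y \<or> (h x = h y \<and> x \<le> y))}"
  have r: "refl_on A L" unfolding L_def refl_on_def by auto
  have s: "L \<subseteq> A \<times> A" unfolding L_def by auto
  have t: "trans L"
  proof (rule transI)
    fix x y z assume "(x,y) \<in> L" "(y,z) \<in> L"
    then show "(x,z) \<in> L" unfolding L_def by (simp, linarith)
  qed
  have a: "antisym L"
  proof (rule antisymI)
    fix x y assume "(x,y) \<in> L" "(y,x) \<in> L"
    then show "x = y" unfolding L_def by (simp, linarith)
  qed
  have to: "total_on A L"
  proof (rule total_onI)
    fix x y assume "x \<in> A" "y \<in> A" "x \<noteq> y"
    then show "(x,y) \<in> L \<or> (y,x) \<in> L" unfolding L_def by (simp, linarith)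
  qed
  have "linear_order_on A L"
    unfolding linear_order_on_def partial_order_on_def preorder_on_def using r s t a to by simp
  moreover have "Q \<subseteq> L"
  proof
    fix p assume "p \<in> Q"
    then obtain x y where p: "p = (x,y)" "(x,y) \<in> Q" by (cases p) auto
    then have "x \<in> A" "y \<in> A" using assms(4) by auto
    moreover have "x \<noteq> y \<Longrightarrow> h x < h y"
      unfolding h_def using rank_down_strict[OF assms p(2)] by simp
    ultimately show "p \<in> L" unfolding L_def p by auto
  qed
  ultimately show ?thesis by blast
qed

definition rk :: "nat \<Rightarrow> (nat \<times> nat) set \<Rightarrow> nat \<Rightarrow> nat" where
  "rk n L x = (if x \<in> {1..n} then card {z\<in>{1..n}. (x,z) \<in> L} else x)"

lemma lin_props:
  assumes "linear_order_on A L"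
  shows "trans L" "antisym L" "L \<subseteq> A \<times> A" "\<forall>x\<in>A. (x,x) \<in> L"
    "\<And>x y. x \<in> A \<Longrightarrow> y \<in> A \<Longrightarrow> x \<noteq> y \<Longrightarrow> (x,y) \<in> L \<or> (y,x) \<in> L"
  using assms unfolding linear_order_on_def partial_order_on_def preorder_on_def refl_on_def
      total_on_def by auto

lemma rk_strict:
  assumes "linear_order_on {1..n} L" "(x,y) \<in> L" "x \<noteq> y"
  shows "rk n L x > rk n L y"
proof -
  note P = lin_props[OF assms(1)]
  have "x \<in> {1..n}" "y \<in> {1..n}" using P(3) assms(2) by auto
  then show ?thesis unfolding rk_def
    using rank_up_strict[OF _ P(1-4) assms(2,3)] by simp
qed

lemma rk_permutes:
  assumes "linear_order_on {1..n} L"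
  shows "rk n L permutes {1..n}"
proof (rule bij_imp_permutes)
  note P = lin_props[OF assms(1)]
  have inj: "inj_on (rk n L) {1..n}"
  proof (rule inj_onI)
    fix x y assume "x \<in> {1..n}" "y \<in> {1..n}" "rk n L x = rk n L y"
    show "x = y"
    proof (rule ccontr)
      assume ne: "x \<noteq> y"
      then have "(x,y) \<in> L \<or> (y,x) \<in> L" using P(5) \<open>x \<in> {1..n}\<close> \<open>y \<in> {1..n}\<close> by blast
      then show False
      proof
        assume "(x,y) \<in> L" then show False using rk_strict[OF assms _ ne] \<open>rk n L x = rk n L y\<close> by simp
      next
        assume "(y,x) \<in> L" then show False using rk_strict[OF assms, of y x] ne \<open>rk n L x = rk n L y\<close> by simp
      qed
    qed
  qed
  have sub: "rk n L ` {1..n} \<subseteq> {1..n}"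
  proof
    fix w assume "w \<in> rk n L ` {1..n}"
    then obtain x where x: "x \<in> {1..n}" "w = rk n L x" by auto
    have "x \<in> {z\<in>{1..n}. (x,z) \<in> L}" using x P(4) by auto
    then have "card {z\<in>{1..n}. (x,z) \<in> L} \<ge> 1"
      using card_mono[of "{z\<in>{1..n}. (x,z) \<in> L}" "{x}"] by simp
    moreover have "card {z\<in>{1..n}. (x,z) \<in> L} \<le> card {1..n}"
      by (rule card_mono) auto
    ultimately show "w \<in> {1..n}" using x unfolding rk_def by auto
  qed
  have "rk n L ` {1..n} = {1..n}" using endo_inj_surj[OF _ sub inj] by simp
  then show "bij_betw (rk n L) {1..n} {1..n}" using inj by (simp add: bij_betw_def)
  show "\<And>x. x \<notin> {1..n} \<Longrightarrow> rk n L x = x" by (auto simp: rk_def)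
qed

lemma reach_dec:
  assumes "satisfies E \<sigma>" "(u,v) \<in> E\<^sup>+"
  shows "\<sigma> u > \<sigma> v"
  using assms(2)
proof (induction rule: trancl_induct)
  case (base y) then show ?case using assms(1) unfolding satisfies_def by auto
next
  case (step y z) then show ?case using assms(1) unfolding satisfies_def by fastforce
qed

lemma flip_po:
  assumes tr: "trans P" and an: "antisym P" and sub: "P \<subseteq> A \<times> A" and rf: "\<forall>x\<in>A. (x,x) \<in> P"
    and nxy: "(x,y) \<notin> P" and nyx: "(y,x) \<notin> P" and xA: "x \<in> A" and yA: "y \<in> A"
    and Q: "Q = P \<union> {(u,v). (u,y) \<in> P \<and> (x,v) \<in> P}"
  shows "trans Q" "antisym Q" "Q \<subseteq> A \<times> A" "\<forall>x\<in>A. (x,x) \<in> Q" "(y,x) \<in> Q"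
proof -
  have t: "\<And>a b c. (a,b) \<in> P \<Longrightarrow> (b,c) \<in> P \<Longrightarrow> (a,c) \<in> P" using tr by (meson transD)
  have a: "\<And>a b. (a,b) \<in> P \<Longrightarrow> (b,a) \<in> P \<Longrightarrow> a = b" using an by (meson antisymD)
  show "trans Q"
  proof (rule transI)
    fix a b c assume ab: "(a,b) \<in> Q" and bc: "(b,c) \<in> Q"
    show "(a,c) \<in> Q" using ab bc unfolding Q using t nxy by blast
  qed
  show "antisym Q"
  proof (rule antisymI)
    fix a b assume ab: "(a,b) \<in> Q" and ba: "(b,a) \<in> Q"
    show "a = b" using ab ba unfolding Q using t a nxy by blast
  qed
  show "Q \<subseteq> A \<times> A" unfolding Q using sub by blast
  show "\<forall>x\<in>A. (x,x) \<in> Q" unfolding Q using rf by blast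
  show "(y,x) \<in> Q" unfolding Q using rf xA yA by blast
qed

lemma leG_po:
  assumes og: "oriented_graph n E" and sat: "satisfies E \<sigma>"
  shows "trans (leG n E)" "antisym (leG n E)" "leG n E \<subseteq> {1..n} \<times> {1..n}"
    "\<forall>x\<in>{1..n}. (x,x) \<in> leG n E"
proof -
  show "trans (leG n E)"
  proof (rule transI)
    fix a b c assume "(a,b) \<in> leG n E" "(b,c) \<in> leG n E"
    then show "(a,c) \<in> leG n E" unfolding leG_def by (auto intro: trancl_trans)
  qed
  show "antisym (leG n E)"
  proof (rule antisymI)
    fix a b assume "(a,b) \<in> leG n E" "(b,a) \<in> leG n E"
    then show "a = b" unfolding leG_def using reach_dec[OF sat, of a b] reach_dec[OF sat, of b a]
      by auto
  qed
  show "leG n E \<subseteq> {1..n} \<times> {1..n}" unfolding leG_def by auto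
  show "\<forall>x\<in>{1..n}. (x,x) \<in> leG n E" unfolding leG_def by auto
qed

lemma dim_witness_exists:
  assumes og: "oriented_graph n E" and sat: "satisfies E \<sigma>"
  shows "\<exists>F. finite F \<and> (\<forall>L\<in>F. linear_order_on {1..n} L) \<and> \<Inter>F = leG n E"
proof -
  let ?A = "{1..n::nat}" and ?P = "leG n E"
  note P = leG_po[OF og sat]
  define F where "F = {L. linear_order_on ?A L \<and> ?P \<subseteq> L}"
  have fin: "finite F"
  proof (rule finite_subset)
    show "F \<subseteq> Pow (?A \<times> ?A)" unfolding F_def using lin_props(3) by blast
  qed auto
  obtain L0 where L0: "linear_order_on ?A L0" "?P \<subseteq> L0" using lin_ext[OF _ P] by auto
  have "\<Inter>F \<subseteq> ?P"
  proof
    fix p assume pF: "p \<in> \<Inter>F"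
    obtain x y where p: "p = (x,y)" by (cases p)
    have L0F: "L0 \<in> F" unfolding F_def using L0 by auto
    then have "(x,y) \<in> L0" using pF p by auto
    then have xA: "x \<in> ?A" and yA: "y \<in> ?A" using lin_props(3)[OF L0(1)] by auto
    show "p \<in> ?P"
    proof (rule ccontr)
      assume nxy: "p \<notin> ?P"
      then have ne: "x \<noteq> y" using P(4) xA p by auto
      show False
      proof (cases "(y,x) \<in> ?P")
        case True
        then have "(y,x) \<in> L0" using L0 by auto
        then show False using \<open>(x,y) \<in> L0\<close> ne lin_props(2)[OF L0(1)] by (meson antisymD)
      next
        case False
        define Q where "Q = ?P \<union> {(u,v). (u,y) \<in> ?P \<and> (x,v) \<in> ?P}"
        note Qp = flip_po[OF P nxy[unfolded p] False xA yA Q_def]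
        obtain L where L: "linear_order_on ?A L" "Q \<subseteq> L" using lin_ext[OF _ Qp(1-4)] by auto
        have "L \<in> F" unfolding F_def using L Q_def by auto
        then have "(x,y) \<in> L" using pF p by auto
        moreover have "(y,x) \<in> L" using L Qp(5) by auto
        ultimately show False using ne lin_props(2)[OF L(1)] by (meson antisymD)
      qed
    qed
  qed
  moreover have "?P \<subseteq> \<Inter>F" unfolding F_def by auto
  ultimately have "\<Inter>F = ?P" by blast
  moreover have "\<forall>L\<in>F. linear_order_on ?A L" unfolding F_def by auto
  ultimately show ?thesis using fin by blast
qed

lemma rk_sat:
  assumes og: "oriented_graph n E" and L: "linear_order_on {1..n} L" and sub: "leG n E \<subseteq> L"
  shows "rk n L \<in> sat_perms n E"
proof -
  have "satisfies E (rk n L)" unfolding satisfies_def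
  proof (intro allI impI)
    fix u v assume e: "(u,v) \<in> E"
    then have "u \<in> {1..n}" "v \<in> {1..n}" "u \<noteq> v" using og unfolding oriented_graph_def by auto
    then have "(u,v) \<in> leG n E" using e unfolding leG_def by auto
    then show "rk n L u > rk n L v" using rk_strict[OF L] sub \<open>u \<noteq> v\<close> by auto
  qed
  then show ?thesis unfolding sat_perms_def using rk_permutes[OF L] by auto
qed

lemma upper:
  assumes s1: "satisfies E \<sigma>" and s2: "satisfies E \<rho>"
  shows "kendall_tau n \<sigma> \<rho> \<le> card (incomparable_pairs n E)"
  unfolding kendall_tau_def
proof (rule card_mono)
  show "finite (incomparable_pairs n E)"
    by (rule finite_subset[of _ "{1..n} \<times> {1..n}"]) (auto simp: incomparable_pairs_def)
  show "{(i,j). i \<in> {1..n} \<and> j \<in> {1..n} \<and> i < j \<and>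
       (int (\<sigma> i) - int (\<sigma> j)) * (int (\<rho> i) - int (\<rho> j)) < 0} \<subseteq> incomparable_pairs n E"
  proof (rule subsetI)
    fix p assume "p \<in> {(i,j). i \<in> {1..n} \<and> j \<in> {1..n} \<and> i < j \<and>
       (int (\<sigma> i) - int (\<sigma> j)) * (int (\<rho> i) - int (\<rho> j)) < 0}"
    then obtain i j where p: "p = (i,j)" and ij: "i \<in> {1..n}" "j \<in> {1..n}" "i < j"
      and h: "(int (\<sigma> i) - int (\<sigma> j)) * (int (\<rho> i) - int (\<rho> j)) < 0" by auto
    have 1: "(i,j) \<notin> E\<^sup>+"
    proof
      assume r: "(i,j) \<in> E\<^sup>+"
      have "int (\<sigma> i) - int (\<sigma> j) > 0" "int (\<rho> i) - int (\<rho> j) > 0"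
        using reach_dec[OF s1 r] reach_dec[OF s2 r] by auto
      then show False using h mult_pos_pos by (metis not_less_iff_gr_or_eq)
    qed
    have 2: "(j,i) \<notin> E\<^sup>+"
    proof
      assume r: "(j,i) \<in> E\<^sup>+"
      have "int (\<sigma> i) - int (\<sigma> j) < 0" "int (\<rho> i) - int (\<rho> j) < 0"
        using reach_dec[OF s1 r] reach_dec[OF s2 r] by auto
      then show False using h mult_neg_neg by (metis not_less_iff_gr_or_eq)
    qed
    show "p \<in> incomparable_pairs n E" using 1 2 p ij unfolding incomparable_pairs_def by blast
  qed
qed

theorem mainTheorem8:
  fixes n :: nat and E :: "(nat \<times> nat) set"
  assumes "oriented_graph n E"
    and "card (sat_perms n E) \<ge> 1"
    and "order_dim {1..n} (leG n E) = 2"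
  shows "Max ((\<lambda>(\<sigma>, \<rho>). kendall_tau n \<sigma> \<rho>) ` (sat_perms n E \<times> sat_perms n E))
           = card (incomparable_pairs n E)"
proof -
  have "sat_perms n E \<noteq> {}" using assms(2) by (metis card.empty not_one_le_zero)
  then obtain \<sigma>0 where s0: "\<sigma>0 \<in> sat_perms n E" by auto
  then have sat0: "satisfies E \<sigma>0" unfolding sat_perms_def by auto
  have finS: "finite (sat_perms n E)"
    by (rule finite_subset[of _ "{p. p permutes {1..n}}"]) (auto simp: sat_perms_def finite_permutations)
  obtain F0 where F0: "finite F0" "\<forall>L\<in>F0. linear_order_on {1..n} L" "\<Inter>F0 = leG n E"
    using dim_witness_exists[OF assms(1) sat0] by auto
  let ?Pk = "\<lambda>k. \<exists>F. finite F \<and> card F = k \<and> (\<forall>L\<in>F. linear_order_on {1..n} L) \<and> \<Inter>F = leG n E"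
  have "?Pk (card F0)" using F0 by blast
  then have "?Pk (order_dim {1..n} (leG n E))" unfolding order_dim_def by (rule LeastI)
  then obtain F where F: "card F = 2" "\<forall>L\<in>F. linear_order_on {1..n} L" "\<Inter>F = leG n E"
    using assms(3) by auto
  then obtain L1 L2 where L12: "F = {L1, L2}" "L1 \<noteq> L2" by (meson card_2_iff)
  have L1: "linear_order_on {1..n} L1" and L2: "linear_order_on {1..n} L2" using F(2) L12 by auto
  have I: "L1 \<inter> L2 = leG n E" using F(3) L12 by auto
  have r1: "rk n L1 \<in> sat_perms n E" using rk_sat[OF assms(1) L1] I by auto
  have r2: "rk n L2 \<in> sat_perms n E" using rk_sat[OF assms(1) L2] I by auto
  let ?f = "\<lambda>(\<sigma>, \<rho>). kendall_tau n \<sigma> \<rho>"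
  have lower: "card (incomparable_pairs n E) \<le> kendall_tau n (rk n L1) (rk n L2)"
    unfolding kendall_tau_def
  proof (rule card_mono)
    show "finite {(i,j). i \<in> {1..n} \<and> j \<in> {1..n} \<and> i < j \<and>
       (int (rk n L1 i) - int (rk n L1 j)) * (int (rk n L2 i) - int (rk n L2 j)) < 0}"
      by (rule finite_subset[of _ "{1..n} \<times> {1..n}"]) auto
    show "incomparable_pairs n E \<subseteq> {(i,j). i \<in> {1..n} \<and> j \<in> {1..n} \<and> i < j \<and>
       (int (rk n L1 i) - int (rk n L1 j)) * (int (rk n L2 i) - int (rk n L2 j)) < 0}"
    proof (rule subsetI)
      fix p assume "p \<in> incomparable_pairs n E"
      then obtain i j where p: "p = (i,j)" and iA: "i \<in> {1..n}" and jA: "j \<in> {1..n}" and ij: "i < j"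
        and n1: "(i,j) \<notin> E\<^sup>+" and n2: "(j,i) \<notin> E\<^sup>+" unfolding incomparable_pairs_def by auto
      have "(int (rk n L1 i) - int (rk n L1 j)) * (int (rk n L2 i) - int (rk n L2 j)) < 0"
      proof -
      have ne: "i \<noteq> j" using ij by simp
      have nij: "(i,j) \<notin> L1 \<inter> L2" using I n1 ne unfolding leG_def by auto
      have nji: "(j,i) \<notin> L1 \<inter> L2" using I n2 ne unfolding leG_def by auto
      have t1: "(i,j) \<in> L1 \<or> (j,i) \<in> L1" using lin_props(5)[OF L1, of i j] iA jA ne by auto
      have t2: "(i,j) \<in> L2 \<or> (j,i) \<in> L2" using lin_props(5)[OF L2, of i j] iA jA ne by auto
      show ?thesis
      proof (cases "(i,j) \<in> L1")
        case True
        then have "(j,i) \<in> L2" using nij t2 by auto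
        then have "int (rk n L1 i) - int (rk n L1 j) > 0" "int (rk n L2 i) - int (rk n L2 j) < 0"
          using rk_strict[OF L1 True ne] rk_strict[OF L2 _ ne[symmetric]] by auto
        then show ?thesis by (simp add: mult_pos_neg)
      next
        case False
        then have a: "(j,i) \<in> L1" using t1 by auto
        then have "(i,j) \<in> L2" using nji t2 by auto
        then have "int (rk n L1 i) - int (rk n L1 j) < 0" "int (rk n L2 i) - int (rk n L2 j) > 0"
          using rk_strict[OF L1 a ne[symmetric]] rk_strict[OF L2 _ ne] by auto
        then show ?thesis by (simp add: mult_neg_pos)
      qed
      qed
      then show "p \<in> {(i,j). i \<in> {1..n} \<and> j \<in> {1..n} \<and> i < j \<and>
       (int (rk n L1 i) - int (rk n L1 j)) * (int (rk n L2 i) - int (rk n L2 j)) < 0}"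
        using p iA jA ij by auto
    qed
  qed
  show ?thesis
  proof (rule Max_eqI)
    show "finite (?f ` (sat_perms n E \<times> sat_perms n E))" using finS by auto
    show "\<And>y. y \<in> ?f ` (sat_perms n E \<times> sat_perms n E) \<Longrightarrow> y \<le> card (incomparable_pairs n E)"
      using upper unfolding sat_perms_def by auto
    have "?f (rk n L1, rk n L2) = card (incomparable_pairs n E)"
      using lower upper[of E "rk n L1" "rk n L2" n] r1 r2 unfolding sat_perms_def by auto
    then show "card (incomparable_pairs n E) \<in> ?f ` (sat_perms n E \<times> sat_perms n E)"
      using r1 r2 by (metis (no_types, lifting) SigmaI image_eqI)
  qed
qed

end
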